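(* Let $G=(V,E)$ be a finite simple undirected graph, $G_0:=G$, and let $W_1,\dots,W_r$ be distinct subsets of $V$ such that for every $t\in\{1,\dots,r\}$, $W_t$ is a clique of $G_{t-1}$ with $|W_t|\ge2$ and $G_t:=G_{t-1}\mid W_t$. Let $k>0$ and suppose that for all $t\in\{1,\dots,r\}$, $|W_t|=k$ and the subgraph of $G_{t-1}$ induced by $\bigcup_{i=1}^tW_i$ is $k$-partite with vertex classes $V_t^1,\dots,V_t^k$. Then $|W_\ell\cap V_t^i|=1$ for all $t\in\{1,\dots,r\}$, $\ell\in\{1,\dots,t\}$ and $i\in\{1,\dots,k\}$.
   Context: The clique projection of a clique $W$ ($|W|\ge2$) of a graph $H=(V,E_H)$ is $H\mid W=(V,E_H\cup\{uv\notin E_H\mid u\ne v,\ W\subseteq N_H(u)\cup N_H(v)\})$, where $N_H(u)$ is the neighborhood of $u$ in $H$. "$k$-partite with vertex classes $V_t^1,\dots,V_t^k$" means these sets partition the vertex set of the induced subgraph and each is a stable set in it. *)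

theory Defs
  imports Main
begin

definition simple_graph :: "'a set \<Rightarrow> 'a set set \<Rightarrow> bool" where
  "simple_graph V E \<longleftrightarrow> finite V \<and> (\<forall>e\<in>E. \<exists>u v. u \<in> V \<and> v \<in> V \<and> u \<noteq> v \<and> e = {u, v})"

definition nbhd :: "'a set set \<Rightarrow> 'a \<Rightarrow> 'a set" where
  "nbhd E u = {v. {u, v} \<in> E}"

definition is_clique :: "'a set \<Rightarrow> 'a set set \<Rightarrow> 'a set \<Rightarrow> bool" where
  "is_clique V E W \<longleftrightarrow> W \<subseteq> V \<and> (\<forall>u\<in>W. \<forall>v\<in>W. u \<noteq> v \<longrightarrow> {u, v} \<in> E)"

definition clique_proj :: "'a set \<Rightarrow> 'a set set \<Rightarrow> 'a set \<Rightarrow> 'a set set" where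
  "clique_proj V E W = E \<union> {{u, v} | u v. u \<in> V \<and> v \<in> V \<and> u \<noteq> v \<and> {u, v} \<notin> E
      \<and> W \<subseteq> nbhd E u \<union> nbhd E v}"

primrec proj_seq :: "'a set \<Rightarrow> 'a set set \<Rightarrow> (nat \<Rightarrow> 'a set) \<Rightarrow> nat \<Rightarrow> 'a set set" where
  "proj_seq V E W 0 = E"
| "proj_seq V E W (Suc t) = clique_proj V (proj_seq V E W t) (W (Suc t))"

definition k_partite_with :: "'a set set \<Rightarrow> 'a set \<Rightarrow> nat \<Rightarrow> (nat \<Rightarrow> 'a set) \<Rightarrow> bool" where
  "k_partite_with E U k C \<longleftrightarrow>
     (\<Union>i\<in>{1..k}. C i) = U
   \<and> (\<forall>i\<in>{1..k}. \<forall>j\<in>{1..k}. i \<noteq> j \<longrightarrow> C i \<inter> C j = {})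
   \<and> (\<forall>i\<in>{1..k}. \<forall>u\<in>C i. \<forall>v\<in>C i. {u, v} \<notin> E)"

end

theory Submission
  imports Defs
begin

lemma proj_seq_mono: "proj_seq V E W s \<subseteq> proj_seq V E W (s + d)"
  by (induction d) (auto simp: clique_proj_def)

lemma proj_seq_mono': "s \<le> s' \<Longrightarrow> proj_seq V E W s \<subseteq> proj_seq V E W s'"
  using proj_seq_mono[of V E W s "s' - s"] by simp

theorem lemma8:
  fixes V :: "'a set" and E :: "'a set set" and W :: "nat \<Rightarrow> 'a set"
    and r k :: nat and C :: "nat \<Rightarrow> nat \<Rightarrow> 'a set"
  assumes "simple_graph V E"
    and "inj_on W {1..r}"
    and "\<forall>t\<in>{1..r}. is_clique V (proj_seq V E W (t - 1)) (W t) \<and> card (W t) \<ge> 2"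
    and "k > 0"
    and "\<forall>t\<in>{1..r}. card (W t) = k"
    and "\<forall>t\<in>{1..r}. k_partite_with (proj_seq V E W (t - 1)) (\<Union>i\<in>{1..t}. W i) k (C t)"
  shows "\<forall>t\<in>{1..r}. \<forall>l\<in>{1..t}. \<forall>i\<in>{1..k}. card (W l \<inter> C t i) = 1"
proof (intro ballI)
  fix t l i assume t: "t \<in> {1..r}" and l: "l \<in> {1..t}" and i: "i \<in> {1..k}"
  have lr: "l \<in> {1..r}" using t l by auto
  have cl: "is_clique V (proj_seq V E W (l - 1)) (W l)" using assms(3) lr by auto
  have sub: "proj_seq V E W (l - 1) \<subseteq> proj_seq V E W (t - 1)"
    using l by (intro proj_seq_mono') auto
  have cl2: "\<forall>u\<in>W l. \<forall>v\<in>W l. u \<noteq> v \<longrightarrow> {u, v} \<in> proj_seq V E W (t - 1)"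
    using cl sub unfolding is_clique_def by (meson subsetD)
  have ck: "card (W l) = k" using assms(5) lr by auto
  hence fin: "finite (W l)" using assms(4) card_ge_0_finite by metis
  have kp: "k_partite_with (proj_seq V E W (t - 1)) (\<Union>i\<in>{1..t}. W i) k (C t)"
    using assms(6) t by auto
  have le1: "card (W l \<inter> C t j) \<le> 1" if j: "j \<in> {1..k}" for j
  proof -
    have "\<forall>x\<in>W l \<inter> C t j. \<forall>y\<in>W l \<inter> C t j. x = y"
    proof (intro ballI)
      fix x y assume x: "x \<in> W l \<inter> C t j" and y: "y \<in> W l \<inter> C t j"
      have "{x, y} \<notin> proj_seq V E W (t - 1)" using kp j x y unfolding k_partite_with_def by auto
      thus "x = y" using cl2 x y by auto
    qed
    thus ?thesis using fin by (simp add: card_le_Suc0_iff_eq)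
  qed
  have "W l \<subseteq> (\<Union>i\<in>{1..t}. W i)" using l by auto
  hence eq: "W l = (\<Union>j\<in>{1..k}. W l \<inter> C t j)"
    using kp unfolding k_partite_with_def by auto
  have "card (W l) = (\<Sum>j\<in>{1..k}. card (W l \<inter> C t j))"
    apply (subst eq)
    apply (rule card_UN_disjoint)
    using fin kp unfolding k_partite_with_def by auto
  hence S: "(\<Sum>j\<in>{1..k}. card (W l \<inter> C t j)) = k" using ck by simp
  show "card (W l \<inter> C t i) = 1"
  proof (rule ccontr)
    assume "card (W l \<inter> C t i) \<noteq> 1"
    hence z: "card (W l \<inter> C t i) = 0" using le1[OF i] by simp
    have "(\<Sum>j\<in>{1..k}. card (W l \<inter> C t j)) = card (W l \<inter> C t i) + (\<Sum>j\<in>{1..k}-{i}. card (W l \<inter> C t j))"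
      using i by (simp add: sum.remove)
    also have "\<dots> \<le> 0 + card ({1..k}-{i}) * 1"
    proof -
      have "(\<Sum>j\<in>{1..k}-{i}. card (W l \<inter> C t j)) \<le> (\<Sum>j\<in>{1..k}-{i}. 1)"
        by (rule sum_mono) (use le1 in auto)
      thus ?thesis using z by simp
    qed
    also have "\<dots> = k - 1" using i by simp
    finally show False using S assms(4) by simp
  qed
qed

end
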